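(* Let $N=\{1,\dots,n\}$. Every set function $s:2^N\to\mathbb{R}$ is a generalized coverage function: there exist a finite set $U$ with $|U|\le 2^{|N|}$, subsets $S_1,\dots,S_n\subseteq U$, a weight function $w:U\to\mathbb{R}$ and a constant $c\in\mathbb{R}$ such that for all $A\subseteq N$, $$s_A = c+\mathbf{w}\Big(\bigcup_{i\in A}S_i\Big),$$ where $\mathbf{w}(S)=\sum_{u\in S}w(u)$ for $S\subseteq U$.
   Context: A generalized coverage function on $N$ is a set function of the form $A\mapsto c+\mathbf{w}(\bigcup_{i\in A}S_i)$ for some collection of subsets $S_1,\dots,S_n$ of a global set $U$, a constant $c\in\mathbb{R}$, and a real weight function $w$ on $U$ (weights may be negative or zero) extended additively to subsets by $\mathbf{w}(S)=\sum_{u\in S}w(u)$. *)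

theory Defs
  imports Complex_Main
begin

definition wt :: "('u \<Rightarrow> real) \<Rightarrow> 'u set \<Rightarrow> real" where
  "wt w S = (\<Sum>u\<in>S. w u)"

end

theory Submission
  imports Defs
begin

lemma mobius_ex:
  fixes N :: "nat set" and f :: "nat set \<Rightarrow> real"
  assumes fin: "finite N"
  shows "\<exists>v. \<forall>A. A \<subseteq> N \<longrightarrow> card (N - A) < k \<longrightarrow>
            (\<Sum>T | A \<subseteq> T \<and> T \<subseteq> N. v T) = f A"
proof (induction k)
  case 0
  then show ?case by auto
next
  case (Suc k)
  then obtain v where v: "\<And>A. A \<subseteq> N \<Longrightarrow> card (N - A) < k \<Longrightarrow>
            (\<Sum>T | A \<subseteq> T \<and> T \<subseteq> N. v T) = f A" by blast
  define v' where "v' T = (if card (N - T) = k then f T - (\<Sum>T' | T \<subset> T' \<and> T' \<subseteq> N. v T') else v T)" for T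
  have finP: "finite {T. A \<subseteq> T \<and> T \<subseteq> N}" for A
    by (rule finite_subset[of _ "Pow N"]) (use fin in auto)
  have "(\<Sum>T | A \<subseteq> T \<and> T \<subseteq> N. v' T) = f A"
    if A: "A \<subseteq> N" "card (N - A) < Suc k" for A
  proof (cases "card (N - A) < k")
    case True
    have "(\<Sum>T | A \<subseteq> T \<and> T \<subseteq> N. v' T) = (\<Sum>T | A \<subseteq> T \<and> T \<subseteq> N. v T)"
    proof (rule sum.cong)
      fix T assume "T \<in> {T. A \<subseteq> T \<and> T \<subseteq> N}"
      then have "N - T \<subseteq> N - A" by auto
      then have "card (N - T) \<le> card (N - A)" using fin by (simp add: card_mono)
      then show "v' T = v T" using True by (simp add: v'_def)
    qed simp
    then show ?thesis using v[OF A(1) True] by simp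
  next
    case False
    then have k: "card (N - A) = k" using A by simp
    have eq: "{T. A \<subseteq> T \<and> T \<subseteq> N} = insert A {T. A \<subset> T \<and> T \<subseteq> N}" using A by auto
    have fin2: "finite {T. A \<subset> T \<and> T \<subseteq> N}"
      by (rule finite_subset[of _ "Pow N"]) (use fin in auto)
    have cong: "(\<Sum>T | A \<subset> T \<and> T \<subseteq> N. v' T) = (\<Sum>T | A \<subset> T \<and> T \<subseteq> N. v T)"
    proof (rule sum.cong)
      fix T assume "T \<in> {T. A \<subset> T \<and> T \<subseteq> N}"
      then have "N - T \<subset> N - A" by auto
      then have "card (N - T) < card (N - A)" using fin by (simp add: psubset_card_mono)
      then show "v' T = v T" using k by (simp add: v'_def)
    qed simp
    have "(\<Sum>T | A \<subseteq> T \<and> T \<subseteq> N. v' T) = v' A + (\<Sum>T | A \<subset> T \<and> T \<subseteq> N. v' T)"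
      unfolding eq using fin2 by (subst sum.insert) auto
    also have "\<dots> = f A" using cong k by (simp add: v'_def)
    finally show ?thesis .
  qed
  then show ?case by blast
qed

theorem theorem1:
  fixes n :: nat and s :: "nat set \<Rightarrow> real"
  shows "\<exists>(U :: nat set) (S :: nat \<Rightarrow> nat set) (w :: nat \<Rightarrow> real) (c :: real).
           finite U \<and> card U \<le> 2 ^ n \<and> (\<forall>i\<in>{1..n}. S i \<subseteq> U) \<and>
           (\<forall>A. A \<subseteq> {1..n} \<longrightarrow> s A = c + wt w (\<Union>i\<in>A. S i))"
proof -
  define N where "N = {1..n::nat}"
  have finN: "finite N" by (simp add: N_def)
  obtain v where v: "\<And>A. A \<subseteq> N \<Longrightarrow> card (N - A) < Suc (card N) \<Longrightarrow>
            (\<Sum>T | A \<subseteq> T \<and> T \<subseteq> N. v T) = - s A"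
    using mobius_ex[OF finN, where f="\<lambda>A. - s A" and k="Suc (card N)"] by blast
  have v2: "(\<Sum>T | A \<subseteq> T \<and> T \<subseteq> N. v T) = - s A" if "A \<subseteq> N" for A
    proof -
    have "card (N - A) \<le> card N" using finN by (simp add: card_mono)
    then show ?thesis using v[OF that] by simp
  qed
  define P where "P = Pow N"
  have finP: "finite P" using finN by (simp add: P_def)
  have cardP: "card P = 2 ^ n" using finN by (simp add: P_def N_def card_Pow)
  obtain h where h: "bij_betw h P {0..<card P}" using ex_bij_betw_finite_nat[OF finP] by blast
  define g where "g = the_inv_into P h"
  have g: "bij_betw g {0..<card P} P" unfolding g_def by (rule bij_betw_the_inv_into[OF h])
  define U where "U = {0..<card P}"
  define S where "S i = {u \<in> U. i \<notin> g u}" for i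
  define w where "w u = v (g u)" for u
  define W where "W = (\<Sum>u\<in>U. w u)"
  have key: "s A = - W + wt w (\<Union>i\<in>A. S i)" if A: "A \<subseteq> N" for A
  proof -
    have un: "(\<Union>i\<in>A. S i) = U - {u \<in> U. A \<subseteq> g u}" unfolding S_def by auto
    have fU: "finite U" by (simp add: U_def)
    have "wt w (\<Union>i\<in>A. S i) = W - (\<Sum>u | u \<in> U \<and> A \<subseteq> g u. w u)"
      unfolding wt_def un W_def using fU by (subst sum_diff) auto
    moreover have "(\<Sum>u | u \<in> U \<and> A \<subseteq> g u. w u) = (\<Sum>T | A \<subseteq> T \<and> T \<subseteq> N. v T)"
    proof -
      have b: "bij_betw g {u. u \<in> U \<and> A \<subseteq> g u} {T. A \<subseteq> T \<and> T \<subseteq> N}"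
      proof -
        have "bij_betw g {u \<in> U. A \<subseteq> g u} (g ` {u \<in> U. A \<subseteq> g u})"
          using g unfolding U_def bij_betw_def by (auto intro: inj_on_subset)
        moreover have "g ` {u \<in> U. A \<subseteq> g u} = {T. A \<subseteq> T \<and> T \<subseteq> N}"
        proof
          show "g ` {u \<in> U. A \<subseteq> g u} \<subseteq> {T. A \<subseteq> T \<and> T \<subseteq> N}"
            using g unfolding U_def P_def bij_betw_def by auto
          show "{T. A \<subseteq> T \<and> T \<subseteq> N} \<subseteq> g ` {u \<in> U. A \<subseteq> g u}"
          proof
            fix T assume T: "T \<in> {T. A \<subseteq> T \<and> T \<subseteq> N}"
            then have "T \<in> P" by (simp add: P_def)
            then obtain u where "u \<in> U" "g u = T" using g unfolding U_def bij_betw_def by (metis atLeast0LessThan imageE lessThan_iff)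
            then show "T \<in> g ` {u \<in> U. A \<subseteq> g u}" using T by auto
          qed
        qed
        ultimately show ?thesis by simp
      qed
      show ?thesis unfolding w_def using sum.reindex_bij_betw[OF b, of v] by simp
    qed
    ultimately show ?thesis using v2[OF A] by simp
  qed
  show ?thesis
  proof (intro exI conjI)
    show "finite U" by (simp add: U_def)
    show "card U \<le> 2 ^ n" by (simp add: U_def cardP)
    show "\<forall>i\<in>{1..n}. S i \<subseteq> U" by (auto simp: S_def)
    show "\<forall>A. A \<subseteq> {1..n} \<longrightarrow> s A = - W + wt w (\<Union>i\<in>A. S i)"
      using key by (simp add: N_def)
  qed
qed

end
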